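(* Let $s\in\{3,4\}$ and consider an $s$-stage explicit Runge–Kutta method with coefficients $a_{ij}$ (with $a_{ij}=0$ for $j\ge i$) and $b_i>0$, which is of order $s$ in OCP. Let $c_i=\sum_{j=1}^s a_{ij}$ and $\bar c_i=\sum_{j=1}^s\bar a_{ij}$ where $\bar a_{ij}=b_j-\frac{b_ja_{ji}}{b_i}$. Then $c_i=\bar c_i$ for all $i=1,\dots,s$.
   Context: A Runge–Kutta method with coefficients $a_{ij}$, $b_i>0$ is of order $r$ in OCP if the partitioned Runge–Kutta method consisting of the method $(a_{ij},b_i)$ for the first component and the method $(\bar a_{ij},\bar b_i)$ with $\bar a_{ij}=b_j-b_ja_{ji}/b_i$, $\bar b_i=b_i$ for the second component has classical order $r$. *)

theory Defs
  imports Main "HOL.Real"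
begin

text \<open>Bi-coloured rooted trees, used for the classical order conditions of
partitioned Runge-Kutta methods.  Colour True = first component (method (a,b)),
colour False = second component (method (abar,bbar)).  Stages are indexed 0..s-1.\<close>

datatype btree = BNode bool "btree list"

fun bcol :: "btree \<Rightarrow> bool" where
  "bcol (BNode c ts) = c"

fun bsize :: "btree \<Rightarrow> nat" where
  "bsize (BNode c ts) = Suc (sum_list (map bsize ts))"

fun bgamma :: "btree \<Rightarrow> nat" where
  "bgamma (BNode c ts) = bsize (BNode c ts) * prod_list (map bgamma ts)"

fun bphi :: "nat \<Rightarrow> (nat \<Rightarrow> nat \<Rightarrow> real) \<Rightarrow> (nat \<Rightarrow> nat \<Rightarrow> real) \<Rightarrow> btree \<Rightarrow> nat \<Rightarrow> real" where
  "bphi s a abar (BNode c ts) i =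
     prod_list (map (\<lambda>t. \<Sum>j<s. (if bcol t then a i j else abar i j) * bphi s a abar t j) ts)"

definition prk_order :: "nat \<Rightarrow> (nat \<Rightarrow> nat \<Rightarrow> real) \<Rightarrow> (nat \<Rightarrow> real)
     \<Rightarrow> (nat \<Rightarrow> nat \<Rightarrow> real) \<Rightarrow> (nat \<Rightarrow> real) \<Rightarrow> nat \<Rightarrow> bool" where
  "prk_order s a b abar bbar r \<longleftrightarrow>
     (\<forall>t. bsize t \<le> r \<longrightarrow>
        (\<Sum>i<s. (if bcol t then b i else bbar i) * bphi s a abar t i) = 1 / real (bgamma t))"

definition ocp_abar :: "(nat \<Rightarrow> nat \<Rightarrow> real) \<Rightarrow> (nat \<Rightarrow> real) \<Rightarrow> nat \<Rightarrow> nat \<Rightarrow> real" where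
  "ocp_abar a b i j = b j - b j * a j i / b i"

definition ocp_order :: "nat \<Rightarrow> (nat \<Rightarrow> nat \<Rightarrow> real) \<Rightarrow> (nat \<Rightarrow> real) \<Rightarrow> nat \<Rightarrow> bool" where
  "ocp_order s a b r \<longleftrightarrow> prk_order s a b (ocp_abar a b) b r"

end

theory Submission
  imports Defs
begin

theorem proposition3p8:
  fixes s :: nat and a :: "nat \<Rightarrow> nat \<Rightarrow> real" and b :: "nat \<Rightarrow> real"
  assumes "s \<in> {3, 4}"
    and "\<And>i j. i < s \<Longrightarrow> j < s \<Longrightarrow> i \<le> j \<Longrightarrow> a i j = 0"
    and "\<And>i. i < s \<Longrightarrow> b i > 0"
    and "ocp_order s a b s"
  shows "\<forall>i<s. (\<Sum>j<s. a i j) = (\<Sum>j<s. ocp_abar a b i j)"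
proof -
  define c where "c i = (\<Sum>j<s. a i j)" for i
  define d where "d i = (\<Sum>k<s. b k * a k i)" for i
  have s3: "3 \<le> s" using assms(1) by auto
  have P: "\<And>t. bsize t \<le> s \<Longrightarrow>
        (\<Sum>i<s. (if bcol t then b i else b i) * bphi s a (ocp_abar a b) t i) = 1 / real (bgamma t)"
    using assms(4) unfolding ocp_order_def prk_order_def by blast
  have F1: "(\<Sum>i<s. b i) = 1"
    using P[of "BNode True []"] s3 by simp
  have F2: "(\<Sum>i<s. b i * c i) = 1/2"
    using P[of "BNode True [BNode True []]"] s3 by (simp add: c_def)
  have F3: "(\<Sum>i<s. b i * c i ^ 2) = 1/3"
    using P[of "BNode True [BNode True [], BNode True []]"] s3
    by (simp add: c_def power2_eq_square)
  have F4': "(\<Sum>i<s. b i * (\<Sum>j<s. a i j * c j)) = 1/6"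
    using P[of "BNode True [BNode True [BNode True []]]"] s3
    by (simp add: c_def)
  have cb: "(\<Sum>j<s. ocp_abar a b i j) = 1 - d i / b i" if "i < s" for i
  proof -
    have "(\<Sum>j<s. ocp_abar a b i j) = (\<Sum>j<s. b j) - (\<Sum>j<s. b j * a j i) / b i"
      unfolding ocp_abar_def by (simp add: sum_subtractf sum_divide_distrib)
    then show ?thesis using F1 by (simp add: d_def)
  qed
  have F5': "(\<Sum>i<s. b i * (\<Sum>j<s. ocp_abar a b i j) ^ 2) = 1/3"
    using P[of "BNode False [BNode False [], BNode False []]"] s3
    by (simp add: power2_eq_square)
  have F5: "(\<Sum>i<s. b i * (1 - d i / b i) ^ 2) = 1/3"
    using F5' cb by simp
  have Fd: "(\<Sum>i<s. d i) = 1/2"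
  proof -
    have "(\<Sum>i<s. d i) = (\<Sum>k<s. b k * c k)"
      unfolding d_def c_def sum_distrib_left by (subst sum.swap) simp
    then show ?thesis using F2 by simp
  qed
  have F4: "(\<Sum>i<s. c i * d i) = 1/6"
  proof -
    have "(\<Sum>i<s. c i * d i) = (\<Sum>i<s. b i * (\<Sum>j<s. a i j * c j))"
      unfolding d_def sum_distrib_left by (subst sum.swap) (simp add: mult_ac)
    then show ?thesis using F4' by simp
  qed
  have F5b: "(\<Sum>i<s. b i * (1 - d i / b i) ^ 2) = (\<Sum>i<s. b i) - 2 * (\<Sum>i<s. d i) + (\<Sum>i<s. d i ^ 2 / b i)"
  proof -
    have "(\<Sum>i<s. b i * (1 - d i / b i) ^ 2) = (\<Sum>i<s. b i - 2 * d i + d i ^ 2 / b i)"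
      proof (intro sum.cong refl)
        fix i assume "i \<in> {..<s}"
        then have "b i \<noteq> 0" using assms(3) by force
        then show "b i * (1 - d i / b i) ^ 2 = b i - 2 * d i + d i ^ 2 / b i"
          by (simp add: field_simps power2_eq_square)
      qed
    then show ?thesis by (simp add: sum.distrib sum_subtractf sum_distrib_left)
  qed
  have Fdd: "(\<Sum>i<s. d i ^ 2 / b i) = 1/3" using F5 F5b F1 Fd by simp
  define e where "e i = b i - b i * c i - d i" for i
  have E: "(\<Sum>i<s. e i ^ 2 / b i) = (\<Sum>i<s. b i) - 2 * (\<Sum>i<s. b i * c i) + (\<Sum>i<s. b i * c i ^ 2)
      - 2 * (\<Sum>i<s. d i) + 2 * (\<Sum>i<s. c i * d i) + (\<Sum>i<s. d i ^ 2 / b i)"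
  proof -
    have "(\<Sum>i<s. e i ^ 2 / b i) = (\<Sum>i<s. b i - 2 * (b i * c i) + b i * c i ^ 2
      - 2 * d i + 2 * (c i * d i) + d i ^ 2 / b i)"
      unfolding e_def
    proof (intro sum.cong refl)
        fix i assume "i \<in> {..<s}"
        then have "b i \<noteq> 0" using assms(3) by force
        then show "(b i - b i * c i - d i) ^ 2 / b i = b i - 2 * (b i * c i) + b i * c i ^ 2
      - 2 * d i + 2 * (c i * d i) + d i ^ 2 / b i"
          by (simp add: field_simps power2_eq_square)
      qed
    then show ?thesis by (simp add: sum.distrib sum_subtractf sum_distrib_left)
  qed
  have E0: "(\<Sum>i<s. e i ^ 2 / b i) = 0"
    using E F1 F2 F3 Fd F4 Fdd by simp
  have "\<forall>i\<in>{..<s}. e i ^ 2 / b i = 0"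
    using E0 assms(3) by (subst sum_nonneg_eq_0_iff[symmetric]) (auto intro!: divide_nonneg_pos)
  show ?thesis
  proof (intro allI impI)
    fix i assume i: "i < s"
    have "e i = 0" using \<open>\<forall>i\<in>{..<s}. e i ^ 2 / b i = 0\<close> i assms(3)[OF i] by auto
    then show "(\<Sum>j<s. a i j) = (\<Sum>j<s. ocp_abar a b i j)"
    proof -
      have "b i * (\<Sum>j<s. a i j) = b i * (\<Sum>j<s. ocp_abar a b i j)"
      proof -
        have "b i * (1 - d i / b i) = b i - d i" using assms(3)[OF i] by (simp add: field_simps)
        then show ?thesis using \<open>e i = 0\<close> cb[OF i] unfolding e_def c_def by simp
      qed
      then show ?thesis using assms(3)[OF i] by simp
    qed
  qed
qed

end
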